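(* Let $G$ be a connected graph. (i) For any $R\subseteq V(G)$: if $v_1v_2\cdots v_kv_1$ ($k\geq 3$) is a cycle in $G_R$ and some edge of this cycle belongs to $\mathcal{U}_R(r)$ for some $r\in R$, then at least two edges of this cycle belong to $\mathcal{U}_R(r)$. (ii) Let $R$ be a resolving set of $G$ and $r\in R$, and let $x,y,z\in V(G)$ be distinct. If $\{x,y\}\in\mathcal{U}_R(r)$ and $\{x,z\}\in\mathcal{U}_R(r)$, then $\{y,z\}\in\mathcal{U}_R(r)$. (iii) If $b$ is a basis forced vertex of $G$ and $R$ is a metric basis of $G$, then $|\mathcal{U}_R(b)|\geq 2$. (iv) If $b$ is a basis forced vertex of $G$ and $R$ is a metric basis of $G$, then there exist $x,y\in V(G)\setminus R$ with $\{x,y\}\in\mathcal{U}_R(b)$.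
   Context: All graphs are finite and simple. For vertices $u,v$ of a connected graph $G$, $d(u,v)$ is the length of a shortest $u$–$v$ path. A set $R\subseteq V(G)$ is a resolving set if for all distinct $x,y\in V(G)$ there is $r\in R$ with $d(r,x)\neq d(r,y)$; a resolving set of minimum cardinality is a metric basis; a vertex is a basis forced vertex if it belongs to every metric basis. For $R\subseteq V(G)$ and $r\in R$, $\mathcal{U}_R(r)$ is the set of unordered pairs $\{x,y\}$ of vertices of $G$ such that $d(r,x)\neq d(r,y)$ and $d(t,x)=d(t,y)$ for all $t\in R\setminus\{r\}$ (pairs resolved by $r$ and by no other element of $R$). The colour graph $G_R$ has vertex set $V(G)$ and edge set $\bigcup_{r\in R}\mathcal{U}_R(r)$; the edges in $\mathcal{U}_R(r)$ are said to have the colour associated with $r$ (these sets are pairwise disjoint). *)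

theory Defs
  imports Main
begin

definition simple_graph :: "'a set \<Rightarrow> ('a \<Rightarrow> 'a \<Rightarrow> bool) \<Rightarrow> bool" where
  "simple_graph V E \<longleftrightarrow> finite V \<and> V \<noteq> {} \<and>
     (\<forall>u v. E u v \<longrightarrow> u \<in> V \<and> v \<in> V) \<and>
     (\<forall>u v. E u v \<longrightarrow> E v u) \<and> (\<forall>u. \<not> E u u)"

fun walk :: "('a \<Rightarrow> 'a \<Rightarrow> bool) \<Rightarrow> 'a list \<Rightarrow> bool" where
  "walk E [] = False"
| "walk E [x] = True"
| "walk E (x # y # xs) = (E x y \<and> walk E (y # xs))"

definition walk_of_length :: "'a set \<Rightarrow> ('a \<Rightarrow> 'a \<Rightarrow> bool) \<Rightarrow> 'a \<Rightarrow> 'a \<Rightarrow> nat \<Rightarrow> bool" where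
  "walk_of_length V E u v n \<longleftrightarrow>
     (\<exists>xs. walk E xs \<and> set xs \<subseteq> V \<and> hd xs = u \<and> last xs = v \<and> length xs = Suc n)"

definition connected_graph :: "'a set \<Rightarrow> ('a \<Rightarrow> 'a \<Rightarrow> bool) \<Rightarrow> bool" where
  "connected_graph V E \<longleftrightarrow> simple_graph V E \<and>
     (\<forall>u\<in>V. \<forall>v\<in>V. \<exists>n. walk_of_length V E u v n)"

definition gdist :: "'a set \<Rightarrow> ('a \<Rightarrow> 'a \<Rightarrow> bool) \<Rightarrow> 'a \<Rightarrow> 'a \<Rightarrow> nat" where
  "gdist V E u v = (LEAST n. walk_of_length V E u v n)"

definition resolving_set :: "'a set \<Rightarrow> ('a \<Rightarrow> 'a \<Rightarrow> bool) \<Rightarrow> 'a set \<Rightarrow> bool" where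
  "resolving_set V E R \<longleftrightarrow> R \<subseteq> V \<and>
     (\<forall>x\<in>V. \<forall>y\<in>V. x \<noteq> y \<longrightarrow> (\<exists>r\<in>R. gdist V E r x \<noteq> gdist V E r y))"

definition metric_basis :: "'a set \<Rightarrow> ('a \<Rightarrow> 'a \<Rightarrow> bool) \<Rightarrow> 'a set \<Rightarrow> bool" where
  "metric_basis V E R \<longleftrightarrow> resolving_set V E R \<and>
     (\<forall>S. resolving_set V E S \<longrightarrow> card R \<le> card S)"

definition basis_forced :: "'a set \<Rightarrow> ('a \<Rightarrow> 'a \<Rightarrow> bool) \<Rightarrow> 'a \<Rightarrow> bool" where
  "basis_forced V E b \<longleftrightarrow> b \<in> V \<and> (\<forall>R. metric_basis V E R \<longrightarrow> b \<in> R)"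

text \<open>U_R(r): unordered pairs (2-element sets) resolved by r and by no other element of R.\<close>
definition uniq_resolved :: "'a set \<Rightarrow> ('a \<Rightarrow> 'a \<Rightarrow> bool) \<Rightarrow> 'a set \<Rightarrow> 'a \<Rightarrow> 'a set set" where
  "uniq_resolved V E R r = {{x, y} | x y. x \<in> V \<and> y \<in> V \<and>
      gdist V E r x \<noteq> gdist V E r y \<and>
      (\<forall>t\<in>R - {r}. gdist V E t x = gdist V E t y)}"

definition colour_edges :: "'a set \<Rightarrow> ('a \<Rightarrow> 'a \<Rightarrow> bool) \<Rightarrow> 'a set \<Rightarrow> 'a set set" where
  "colour_edges V E R = (\<Union>r\<in>R. uniq_resolved V E R r)"

text \<open>The list vs = [v_1,...,v_k] (k >= 3, distinct vertices) is a cycle v_1 ... v_k v_1 in G_R.\<close>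
definition colour_cycle :: "'a set \<Rightarrow> ('a \<Rightarrow> 'a \<Rightarrow> bool) \<Rightarrow> 'a set \<Rightarrow> 'a list \<Rightarrow> bool" where
  "colour_cycle V E R vs \<longleftrightarrow> length vs \<ge> 3 \<and> distinct vs \<and> set vs \<subseteq> V \<and>
     (\<forall>i < length vs. {vs ! i, vs ! ((i + 1) mod length vs)} \<in> colour_edges V E R)"

end

theory Submission
  imports Defs
begin

lemma gdist_self: "x \<in> V \<Longrightarrow> gdist V E x x = 0"
  unfolding gdist_def walk_of_length_def
  by (rule Least_eq_0, rule exI[of _ "[x]"], auto)

lemma gdist_pos:
  assumes "connected_graph V E" "x \<in> V" "y \<in> V" "x \<noteq> y"
  shows "gdist V E x y \<noteq> 0"
proof
  assume h: "gdist V E x y = 0"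
  obtain n where "walk_of_length V E x y n" using assms unfolding connected_graph_def by blast
  hence "walk_of_length V E x y (gdist V E x y)" unfolding gdist_def by (rule LeastI)
  then obtain xs where "hd xs = x" "last xs = y" "length xs = 1"
    using h unfolding walk_of_length_def by auto
  then show False using assms(4)
    by (metis One_nat_def last_ConsL length_0_conv length_Suc_conv list.sel(1))
qed

lemma ur_mem:
  assumes "{a,b} \<in> uniq_resolved V E R r"
  shows "a \<in> V \<and> b \<in> V \<and> gdist V E r a \<noteq> gdist V E r b \<and> (\<forall>t\<in>R-{r}. gdist V E t a = gdist V E t b)"
proof -
  obtain x y where xy: "{a,b} = {x,y}" "x \<in> V" "y \<in> V" "gdist V E r x \<noteq> gdist V E r y"
    "\<forall>t\<in>R-{r}. gdist V E t x = gdist V E t y"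
    using assms unfolding uniq_resolved_def by blast
  from xy(1) have "(a = x \<and> b = y) \<or> (a = y \<and> b = x)" by (simp add: doubleton_eq_iff)
  then show ?thesis using xy by (elim disjE) (simp, metis)
qed

lemma ur_intro:
  assumes "a \<in> V" "b \<in> V" "gdist V E r a \<noteq> gdist V E r b" "\<forall>t\<in>R-{r}. gdist V E t a = gdist V E t b"
  shows "{a,b} \<in> uniq_resolved V E R r"
  using assms unfolding uniq_resolved_def by blast

lemma ur_other:
  assumes "{a,b} \<in> uniq_resolved V E R s" "r \<in> R" "r \<noteq> s"
  shows "gdist V E r a = gdist V E r b"
  using ur_mem[OF assms(1)] assms by auto

lemma mod_ne:
  assumes "j < (k::nat)" "0 < m" "m < k"
  shows "(j + m) mod k \<noteq> j"
proof (cases "j + m < k")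
  case True then show ?thesis using assms by simp
next
  case False
  then have "(j + m) mod k = (j + m - k) mod k" by (simp add: le_mod_geq)
  also have "\<dots> = j + m - k" using assms by simp
  finally show ?thesis using assms False by linarith
qed

lemma part1:
  assumes cyc: "colour_cycle V E R vs" and rR: "r \<in> R" and jk: "j < length vs"
    and ej: "{vs ! j, vs ! ((j + 1) mod length vs)} \<in> uniq_resolved V E R r"
  shows "card {i. i < length vs \<and> {vs ! i, vs ! ((i + 1) mod length vs)} \<in> uniq_resolved V E R r} \<ge> 2"
proof (rule ccontr)
  define k where "k = length vs"
  define S where "S = {i. i < length vs \<and> {vs ! i, vs ! ((i + 1) mod length vs)} \<in> uniq_resolved V E R r}"
  assume "\<not> ?thesis"
  hence c: "card S < 2" unfolding S_def by simp
  have fin: "finite S" unfolding S_def by auto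
  have jS: "j \<in> S" unfolding S_def using jk ej by auto
  have "card S > 0" using fin jS card_gt_0_iff by blast
  hence "card S = 1" using c by linarith
  then have Sj: "S = {j}" using jS by (metis card_1_singletonE singletonD)
  define f where "f = gdist V E r"
  define g where "g n = f (vs ! (n mod k))" for n
  have k3: "k \<ge> 3" using cyc unfolding colour_cycle_def k_def by simp
  have edges: "\<forall>i < k. {vs ! i, vs ! ((i + 1) mod k)} \<in> colour_edges V E R"
    using cyc unfolding colour_cycle_def k_def by simp
  have step: "g n = g (Suc n)" if "n mod k \<noteq> j" for n
  proof -
    let ?i = "n mod k"
    have ik: "?i < k" using k3 by simp
    then obtain s where sR: "s \<in> R" and es: "{vs ! ?i, vs ! ((?i + 1) mod k)} \<in> uniq_resolved V E R s"
      using edges unfolding colour_edges_def by blast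
    have "?i \<notin> S" using Sj that by simp
    hence "s \<noteq> r" using es ik unfolding S_def k_def by auto
    hence "f (vs ! ?i) = f (vs ! ((?i + 1) mod k))" using ur_other[OF es rR] f_def by simp
    moreover have "(?i + 1) mod k = Suc n mod k" by (simp add: mod_Suc_eq)
    ultimately show ?thesis unfolding g_def by simp
  qed
  have ind: "n \<le> k - 1 \<Longrightarrow> g (Suc j + n) = g (Suc j)" for n
  proof (induction n)
    case 0 then show ?case by simp
  next
    case (Suc n)
    have "(j + Suc n) mod k \<noteq> j" using mod_ne[of j k "Suc n"] jk Suc.prems k_def k3 by simp
    hence "g (Suc j + n) = g (Suc (Suc j + n))" by (intro step) simp
    then show ?case using Suc by simp
  qed
  have "g (Suc j + (k - 1)) = g (Suc j)" using ind by simp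
  moreover have "Suc j + (k - 1) = j + k" using k3 by simp
  moreover have "g (j + k) = g j" unfolding g_def by simp
  moreover have "g j \<noteq> g (Suc j)" using ur_mem[OF ej] jk unfolding g_def f_def k_def by simp
  ultimately show False by simp
qed


lemma part2:
  assumes res: "resolving_set V E R" and "x \<in> V" "y \<in> V" "z \<in> V" "y \<noteq> z"
    and xy: "{x, y} \<in> uniq_resolved V E R r" and xz: "{x, z} \<in> uniq_resolved V E R r"
  shows "{y, z} \<in> uniq_resolved V E R r"
proof -
  have o: "\<forall>t\<in>R-{r}. gdist V E t y = gdist V E t z"
    using ur_mem[OF xy] ur_mem[OF xz] by auto
  have "gdist V E r y \<noteq> gdist V E r z"
  proof
    assume "gdist V E r y = gdist V E r z"
    with o have "\<forall>t\<in>R. gdist V E t y = gdist V E t z" by (metis Diff_iff singletonD)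
    moreover have "\<exists>r\<in>R. gdist V E r y \<noteq> gdist V E r z"
      using res assms(3,4,5) unfolding resolving_set_def by blast
    ultimately show False by blast
  qed
  then show ?thesis by (rule ur_intro[OF assms(3) assms(4) _ o])
qed

lemma part3:
  assumes conn: "connected_graph V E" and bf: "basis_forced V E b" and mb: "metric_basis V E R"
  shows "card (uniq_resolved V E R b) \<ge> 2"
proof (rule ccontr)
  let ?U = "uniq_resolved V E R b"
  assume "\<not> ?thesis"
  hence c: "card ?U < 2" by simp
  have bR: "b \<in> R" using bf mb unfolding basis_forced_def by blast
  have res: "resolving_set V E R" using mb unfolding metric_basis_def by blast
  have RV: "R \<subseteq> V" using res unfolding resolving_set_def by blast
  have finV: "finite V" using conn unfolding connected_graph_def simple_graph_def by blast
  have finR: "finite R" using RV finV finite_subset by blast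
  have "?U \<subseteq> Pow V" unfolding uniq_resolved_def by auto
  hence finU: "finite ?U" using finV finite_subset by blast
  have key: "\<exists>r\<in>R-{b}. gdist V E r u \<noteq> gdist V E r v"
    if uvh: "u \<in> V" "v \<in> V" "u \<noteq> v" "{u,v} \<notin> ?U" for u v
  proof (rule ccontr)
    assume "\<not> ?thesis"
    hence "\<forall>t\<in>R-{b}. gdist V E t u = gdist V E t v" by blast
    obtain r where rr: "r \<in> R" "gdist V E r u \<noteq> gdist V E r v"
      using res uvh unfolding resolving_set_def by blast
    have "r = b"
    proof (rule ccontr)
      assume "r \<noteq> b"
      thus False using rr \<open>\<forall>t\<in>R-{b}. _\<close> by blast
    qed
    hence bd: "gdist V E b u \<noteq> gdist V E b v" using rr by simp
    have "{u,v} \<in> ?U" by (rule ur_intro[OF uvh(1) uvh(2) bd \<open>\<forall>t\<in>R-{b}. _\<close>])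
    then show False using uvh by blast
  qed
  show False
  proof (cases "card ?U = 0")
    case True
    hence U0: "?U = {}" using finU by simp
    have "resolving_set V E (R - {b})"
      unfolding resolving_set_def using RV key U0 by blast
    hence "card R \<le> card (R - {b})" using mb unfolding metric_basis_def by blast
    moreover have "card (R - {b}) < card R" by (rule card_Diff1_less[OF finR bR])
    ultimately show False by simp
  next
    case False
    hence "card ?U = 1" using c by simp
    then obtain p where Up: "?U = {p}" by (rule card_1_singletonE)
    have "p \<in> ?U" using Up by simp
    then obtain x y where pxy: "p = {x,y}" "x \<in> V" "y \<in> V" "gdist V E b x \<noteq> gdist V E b y"
      unfolding uniq_resolved_def by blast
    have xny: "x \<noteq> y" using pxy by auto
    obtain w where w: "w \<in> {x,y}" "w \<noteq> b" using xny by blast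
    have wV: "w \<in> V" using w pxy by auto
    define R' where "R' = insert w (R - {b})"
    have wres: "gdist V E w x \<noteq> gdist V E w y"
    proof (cases "w = x")
      case True then show ?thesis using gdist_self[OF wV, of E] gdist_pos[OF conn pxy(2,3) xny] by simp
    next
      case False
      hence "w = y" using w by auto
      then show ?thesis using gdist_self[OF wV, of E] gdist_pos[OF conn pxy(3,2)] xny by simp
    qed
    have resR': "resolving_set V E R'"
      unfolding resolving_set_def
    proof (intro conjI ballI impI)
      show "R' \<subseteq> V" using RV wV R'_def by auto
    next
      fix u v assume uv: "u \<in> V" "v \<in> V" "u \<noteq> v"
      show "\<exists>r\<in>R'. gdist V E r u \<noteq> gdist V E r v"
      proof (cases "{u,v} \<in> ?U")
        case True
        hence "{u,v} = {x,y}" using Up pxy by simp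
        hence "(u = x \<and> v = y) \<or> (u = y \<and> v = x)" by (simp add: doubleton_eq_iff)
        then show ?thesis using wres R'_def by auto
      next
        case False
        then show ?thesis using key[OF uv False] R'_def by auto
      qed
    qed
    have cR': "card R' \<le> card R"
    proof -
      have "card R' \<le> Suc (card (R - {b}))" unfolding R'_def using finR by (simp add: card_insert_if)
      also have "\<dots> = card R" using card_Suc_Diff1[OF finR bR] by simp
      finally show ?thesis .
    qed
    have "metric_basis V E R'" unfolding metric_basis_def
    proof (intro conjI allI impI)
      show "resolving_set V E R'" by (rule resR')
    next
      fix S assume "resolving_set V E S"
      hence "card R \<le> card S" using mb unfolding metric_basis_def by blast
      thus "card R' \<le> card S" using cR' by simp
    qed
    hence "b \<in> R'" using bf unfolding basis_forced_def by blast
    then show False using w R'_def by auto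
  qed
qed

lemma part4:
  assumes conn: "connected_graph V E" and bf: "basis_forced V E b" and mb: "metric_basis V E R"
  shows "\<exists>x \<in> V - R. \<exists>y \<in> V - R. {x, y} \<in> uniq_resolved V E R b"
proof -
  let ?U = "uniq_resolved V E R b"
  have res: "resolving_set V E R" using mb unfolding metric_basis_def by blast
  have c: "card ?U \<ge> 2" using part3[OF assms] .
  have notR: "u \<notin> R" if "{u,v} \<in> ?U" "u \<noteq> b" for u v
  proof
    assume uR: "u \<in> R"
    have m: "u \<in> V" "v \<in> V" "u \<noteq> v" using ur_mem[OF that(1)] by auto
    have uRb: "u \<in> R - {b}" using uR that(2) by simp
    have "\<forall>t\<in>R-{b}. gdist V E t u = gdist V E t v" using ur_mem[OF that(1)] by blast
    hence "gdist V E u u = gdist V E u v" using uRb by blast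
    then show False using gdist_self[OF m(1), of E] gdist_pos[OF conn m] by simp
  qed
  have gen: "?thesis" if "{u,v} \<in> ?U" "u \<noteq> b" "v \<noteq> b" for u v
  proof -
    have uv: "u \<in> V" "v \<in> V" using ur_mem[OF that(1)] by auto
    have "u \<notin> R" using notR[OF that(1) that(2)] .
    hence u: "u \<in> V - R" using uv by simp
    have "{v,u} \<in> ?U" using that(1) by (simp add: insert_commute)
    hence "v \<notin> R" using notR that(3) by blast
    hence v: "v \<in> V - R" using uv by simp
    show ?thesis using that(1) u v by (intro bexI[of _ u] bexI[of _ v])
  qed
  obtain p q where pq: "p \<in> ?U" "q \<in> ?U" "p \<noteq> q"
  proof -
    have "\<not> (\<exists>a. ?U \<subseteq> {a})"
    proof
      assume "\<exists>a. ?U \<subseteq> {a}"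
      then obtain a where "?U \<subseteq> {a}" by blast
      hence "card ?U \<le> 1" using card_mono[of "{a}" ?U] by simp
      with c show False by simp
    qed
    then obtain p q where "p \<in> ?U" "q \<in> ?U" "p \<noteq> q" by blast
    then show ?thesis by (rule that)
  qed
  obtain x1 y1 where p: "p = {x1,y1}" using pq unfolding uniq_resolved_def by blast
  obtain x2 y2 where q: "q = {x2,y2}" using pq unfolding uniq_resolved_def by blast
  show ?thesis
  proof (cases "x1 \<noteq> b \<and> y1 \<noteq> b")
    case True then show ?thesis using gen[of x1 y1] pq(1) p by simp
  next
    case F1: False
    show ?thesis
    proof (cases "x2 \<noteq> b \<and> y2 \<noteq> b")
      case True then show ?thesis using gen[of x2 y2] pq(2) q by simp
    next
      case False
      have "p = {b,y1} \<or> p = {b,x1}" using F1 p by (cases "x1 = b") (auto simp: insert_commute)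
      then obtain c1 where c1e: "p = {b,c1}" by blast
      hence c1: "{b,c1} \<in> ?U" "p = {b,c1}" using pq by auto
      have "q = {b,y2} \<or> q = {b,x2}" using False q by (cases "x2 = b") (auto simp: insert_commute)
      then obtain c2 where c2e: "q = {b,c2}" by blast
      hence c2: "{b,c2} \<in> ?U" "q = {b,c2}" using pq by auto
      have m1: "b \<in> V" "c1 \<in> V" "b \<noteq> c1" using ur_mem[OF c1(1)] by auto
      have m2: "c2 \<in> V" "b \<noteq> c2" using ur_mem[OF c2(1)] by auto
      have "c1 \<noteq> c2" using pq c1 c2 by auto
      hence "{c1,c2} \<in> ?U" using part2[OF res m1(1) m1(2) m2(1) _ c1(1) c2(1)] by blast
      then show ?thesis using gen[of c1 c2] m1 m2 by simp
    qed
  qed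
qed

theorem lemma10:
  fixes V :: "'a set" and E :: "'a \<Rightarrow> 'a \<Rightarrow> bool"
  assumes conn: "connected_graph V E"
  shows
    "(\<forall>R vs r. R \<subseteq> V \<longrightarrow> colour_cycle V E R vs \<longrightarrow> r \<in> R \<longrightarrow>
        (\<exists>i < length vs. {vs ! i, vs ! ((i + 1) mod length vs)} \<in> uniq_resolved V E R r) \<longrightarrow>
        card {i. i < length vs \<and> {vs ! i, vs ! ((i + 1) mod length vs)} \<in> uniq_resolved V E R r} \<ge> 2)
   \<and> (\<forall>R r x y z. resolving_set V E R \<longrightarrow> r \<in> R \<longrightarrow> x \<in> V \<longrightarrow> y \<in> V \<longrightarrow> z \<in> V \<longrightarrow>
        x \<noteq> y \<longrightarrow> x \<noteq> z \<longrightarrow> y \<noteq> z \<longrightarrow>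
        {x, y} \<in> uniq_resolved V E R r \<longrightarrow> {x, z} \<in> uniq_resolved V E R r \<longrightarrow>
        {y, z} \<in> uniq_resolved V E R r)
   \<and> (\<forall>b R. basis_forced V E b \<longrightarrow> metric_basis V E R \<longrightarrow>
        card (uniq_resolved V E R b) \<ge> 2)
   \<and> (\<forall>b R. basis_forced V E b \<longrightarrow> metric_basis V E R \<longrightarrow>
        (\<exists>x \<in> V - R. \<exists>y \<in> V - R. {x, y} \<in> uniq_resolved V E R b))"
proof (intro conjI allI impI)
  fix R vs r
  assume "R \<subseteq> V" and cyc: "colour_cycle V E R vs" and rR: "r \<in> R"
    and ex: "\<exists>i < length vs. {vs ! i, vs ! ((i + 1) mod length vs)} \<in> uniq_resolved V E R r"
  from ex obtain j where j1: "j < length vs" and j2: "{vs ! j, vs ! ((j + 1) mod length vs)} \<in> uniq_resolved V E R r"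
    by blast
  show "card {i. i < length vs \<and> {vs ! i, vs ! ((i + 1) mod length vs)} \<in> uniq_resolved V E R r} \<ge> 2"
    by (rule part1[OF cyc rR j1 j2])
next
  fix R r x y z
  assume h: "resolving_set V E R" "r \<in> R" "x \<in> V" "y \<in> V" "z \<in> V" "x \<noteq> y" "x \<noteq> z" "y \<noteq> z"
    "{x, y} \<in> uniq_resolved V E R r" "{x, z} \<in> uniq_resolved V E R r"
  show "{y, z} \<in> uniq_resolved V E R r" by (rule part2[OF h(1) h(3) h(4) h(5) h(8) h(9) h(10)])
next
  fix b R assume "basis_forced V E b" "metric_basis V E R"
  then show "card (uniq_resolved V E R b) \<ge> 2" by (rule part3[OF conn])
next
  fix b R assume "basis_forced V E b" "metric_basis V E R"
  then show "\<exists>x \<in> V - R. \<exists>y \<in> V - R. {x, y} \<in> uniq_resolved V E R b" by (rule part4[OF conn])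
qed

end
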